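(* Let $\mathbf P=(P,\leq,{}',0,1)$ be an orthogonal lub-complete poset. Then the following conditions are equivalent: (i) $\mathbf P$ is an orthomodular poset. (ii) $\mathbf P$ satisfies $x\leq y$ if and only if $x\rightarrow_S y=1$ for all $x,y\in P$. (iii) $\mathbf P$ satisfies $x\leq y$ if and only if $x\rightarrow_D y=1$ for all $x,y\in P$.
   Context: $(P,\leq,{}',0,1)$ is a bounded poset with an antitone involution ${}'$; orthogonal means $x\leq y'$ implies $x\vee y$ exists; lub-complete means for every lower bound $x$ of a finite subset $M$ there is a maximal lower bound of $M$ above $x$; orthomodular means orthogonal and $x\leq y$ implies $x\vee(y\wedge x')=y$. $L(x,y)$ is the set of common lower bounds and $\mathrm{Max}\,A$ the set of maximal elements of $A$; joins with sets are elementwise. Sasaki implication: $x\rightarrow_S y:=x'\vee \mathrm{Max}\,L(x,y)$; Dishkant implication: $x\rightarrow_D y:=y'\rightarrow_S x'=y\vee \mathrm{Max}\,L(x',y')$. "$=1$" means equal to $\{1\}$. *)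

theory Defs
  imports Main
begin

definition bounded_poset_inv ::
  "'a set \<Rightarrow> ('a \<Rightarrow> 'a \<Rightarrow> bool) \<Rightarrow> ('a \<Rightarrow> 'a) \<Rightarrow> 'a \<Rightarrow> 'a \<Rightarrow> bool" where
  "bounded_poset_inv P le c zero one \<longleftrightarrow>
     (\<forall>x\<in>P. le x x) \<and>
     (\<forall>x\<in>P. \<forall>y\<in>P. le x y \<and> le y x \<longrightarrow> x = y) \<and>
     (\<forall>x\<in>P. \<forall>y\<in>P. \<forall>w\<in>P. le x y \<and> le y w \<longrightarrow> le x w) \<and>
     zero \<in> P \<and> one \<in> P \<and> (\<forall>x\<in>P. le zero x \<and> le x one) \<and>
     (\<forall>x\<in>P. c x \<in> P) \<and> (\<forall>x\<in>P. c (c x) = x) \<and>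
     (\<forall>x\<in>P. \<forall>y\<in>P. le x y \<longrightarrow> le (c y) (c x))"

definition is_join :: "'a set \<Rightarrow> ('a \<Rightarrow> 'a \<Rightarrow> bool) \<Rightarrow> 'a \<Rightarrow> 'a \<Rightarrow> 'a \<Rightarrow> bool" where
  "is_join P le x y j \<longleftrightarrow> j \<in> P \<and> le x j \<and> le y j \<and>
     (\<forall>u\<in>P. le x u \<and> le y u \<longrightarrow> le j u)"

definition is_meet :: "'a set \<Rightarrow> ('a \<Rightarrow> 'a \<Rightarrow> bool) \<Rightarrow> 'a \<Rightarrow> 'a \<Rightarrow> 'a \<Rightarrow> bool" where
  "is_meet P le x y m \<longleftrightarrow> m \<in> P \<and> le m x \<and> le m y \<and>
     (\<forall>u\<in>P. le u x \<and> le u y \<longrightarrow> le u m)"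

definition LB :: "'a set \<Rightarrow> ('a \<Rightarrow> 'a \<Rightarrow> bool) \<Rightarrow> 'a set \<Rightarrow> 'a set" where
  "LB P le M = {w \<in> P. \<forall>m\<in>M. le w m}"

definition Lxy :: "'a set \<Rightarrow> ('a \<Rightarrow> 'a \<Rightarrow> bool) \<Rightarrow> 'a \<Rightarrow> 'a \<Rightarrow> 'a set" where
  "Lxy P le x y = {w \<in> P. le w x \<and> le w y}"

definition MaxS :: "('a \<Rightarrow> 'a \<Rightarrow> bool) \<Rightarrow> 'a set \<Rightarrow> 'a set" where
  "MaxS le A = {w \<in> A. \<forall>v\<in>A. le w v \<longrightarrow> v = w}"

definition orthogonal :: "'a set \<Rightarrow> ('a \<Rightarrow> 'a \<Rightarrow> bool) \<Rightarrow> ('a \<Rightarrow> 'a) \<Rightarrow> bool" where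
  "orthogonal P le c \<longleftrightarrow>
     (\<forall>x\<in>P. \<forall>y\<in>P. le x (c y) \<longrightarrow> (\<exists>j. is_join P le x y j))"

definition lub_complete :: "'a set \<Rightarrow> ('a \<Rightarrow> 'a \<Rightarrow> bool) \<Rightarrow> bool" where
  "lub_complete P le \<longleftrightarrow>
     (\<forall>M. M \<subseteq> P \<and> finite M \<longrightarrow>
        (\<forall>x \<in> LB P le M. \<exists>w \<in> MaxS le (LB P le M). le x w))"

definition orthomodular :: "'a set \<Rightarrow> ('a \<Rightarrow> 'a \<Rightarrow> bool) \<Rightarrow> ('a \<Rightarrow> 'a) \<Rightarrow> bool" where
  "orthomodular P le c \<longleftrightarrow> orthogonal P le c \<and>
     (\<forall>x\<in>P. \<forall>y\<in>P. le x y \<longrightarrow>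
        (\<exists>m. is_meet P le y (c x) m \<and> is_join P le x m y))"

definition join_set :: "'a set \<Rightarrow> ('a \<Rightarrow> 'a \<Rightarrow> bool) \<Rightarrow> 'a \<Rightarrow> 'a set \<Rightarrow> 'a set" where
  "join_set P le x M = {j. \<exists>m\<in>M. is_join P le x m j}"

definition sasaki :: "'a set \<Rightarrow> ('a \<Rightarrow> 'a \<Rightarrow> bool) \<Rightarrow> ('a \<Rightarrow> 'a) \<Rightarrow> 'a \<Rightarrow> 'a \<Rightarrow> 'a set" where
  "sasaki P le c x y = join_set P le (c x) (MaxS le (Lxy P le x y))"

definition dishkant :: "'a set \<Rightarrow> ('a \<Rightarrow> 'a \<Rightarrow> bool) \<Rightarrow> ('a \<Rightarrow> 'a) \<Rightarrow> 'a \<Rightarrow> 'a \<Rightarrow> 'a set" where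
  "dishkant P le c x y = sasaki P le c (c y) (c x)"

end

theory Submission
  imports Defs
begin

locale bpi =
  fixes P le c zero one
  assumes bpi: "bounded_poset_inv P le c zero one"
begin

lemma refl: "x \<in> P \<Longrightarrow> le x x" using bpi unfolding bounded_poset_inv_def by blast
lemma antis: "x \<in> P \<Longrightarrow> y \<in> P \<Longrightarrow> le x y \<Longrightarrow> le y x \<Longrightarrow> x = y"
  using bpi unfolding bounded_poset_inv_def by blast
lemma trans: "x \<in> P \<Longrightarrow> y \<in> P \<Longrightarrow> w \<in> P \<Longrightarrow> le x y \<Longrightarrow> le y w \<Longrightarrow> le x w"
  using bpi unfolding bounded_poset_inv_def by blast
lemma zP: "zero \<in> P" using bpi unfolding bounded_poset_inv_def by blast
lemma oP: "one \<in> P" using bpi unfolding bounded_poset_inv_def by blast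
lemma zle: "x \<in> P \<Longrightarrow> le zero x" using bpi unfolding bounded_poset_inv_def by blast
lemma leo: "x \<in> P \<Longrightarrow> le x one" using bpi unfolding bounded_poset_inv_def by blast
lemma cP: "x \<in> P \<Longrightarrow> c x \<in> P" using bpi unfolding bounded_poset_inv_def by blast
lemma cc: "x \<in> P \<Longrightarrow> c (c x) = x" using bpi unfolding bounded_poset_inv_def by blast
lemma anti: "x \<in> P \<Longrightarrow> y \<in> P \<Longrightarrow> le x y \<Longrightarrow> le (c y) (c x)"
  using bpi unfolding bounded_poset_inv_def by blast
lemma cle: "x \<in> P \<Longrightarrow> y \<in> P \<Longrightarrow> le (c x) (c y) \<longleftrightarrow> le y x"
  using anti[of "c x" "c y"] anti[of y x] cP cc by auto
lemma cle1: "x \<in> P \<Longrightarrow> y \<in> P \<Longrightarrow> le x (c y) \<longleftrightarrow> le y (c x)"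
  using cle[of "c x" y] cc cP by auto
lemma c_zero: "c zero = one"
proof -
  have "le zero (c one)" using zle cP oP by blast
  then have "le one (c zero)" using anti[of zero "c one"] cc oP cP zP by simp
  then show ?thesis using antis leo cP zP oP by blast
qed
lemma c_one: "c one = zero"
  using c_zero cc zP by metis

lemma join_unique: "is_join P le x y j \<Longrightarrow> is_join P le x y j' \<Longrightarrow> j = j'"
  unfolding is_join_def by (meson antis)

lemma meet_dual:
  assumes "x \<in> P" "y \<in> P" "is_join P le (c x) (c y) j"
  shows "is_meet P le x y (c j)"
  using assms unfolding is_join_def is_meet_def
  by (metis cP cc cle cle1)

lemma join_zero: "x \<in> P \<Longrightarrow> is_join P le x zero j \<Longrightarrow> j = x"
  unfolding is_join_def by (meson antis refl zle)

lemma max_le: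
  assumes "x \<in> P" "y \<in> P" "le x y"
  shows "MaxS le (Lxy P le x y) = {x}"
  using assms unfolding MaxS_def Lxy_def
  by (auto intro: refl dest: antis)

lemma sasaki_le:
  assumes "x \<in> P" "y \<in> P" "le x y"
  shows "sasaki P le c x y = {j. is_join P le (c x) x j}"
  using max_le[OF assms] unfolding sasaki_def join_set_def by auto

lemma sasaki_ge:
  assumes "x \<in> P" "y \<in> P" "le y x"
  shows "sasaki P le c x y = {j. is_join P le (c x) y j}"
proof -
  have "Lxy P le x y = Lxy P le y x" unfolding Lxy_def by auto
  then show ?thesis using max_le[OF assms(2,1,3)] unfolding sasaki_def join_set_def by auto
qed

lemma sasaki_one_le:
  assumes "x \<in> P" "y \<in> P" "le x y" "is_join P le (c x) x one"
  shows "sasaki P le c x y = {one}"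
  using sasaki_le[OF assms(1-3)] assms(4) join_unique by auto

lemma max_exists:
  assumes "lub_complete P le" "x \<in> P" "y \<in> P"
  obtains m where "m \<in> MaxS le (Lxy P le x y)"
proof -
  have "zero \<in> LB P le {x, y}" using assms zP zle unfolding LB_def by auto
  then obtain w where "w \<in> MaxS le (LB P le {x, y})"
    using assms(1-3) unfolding lub_complete_def by (meson empty_subsetI finite.emptyI finite.insertI insert_subset)
  moreover have "LB P le {x, y} = Lxy P le x y" unfolding LB_def Lxy_def by auto
  ultimately show ?thesis using that by auto
qed

lemma part_i_ii:
  assumes om: "orthomodular P le c" and lc: "lub_complete P le"
    and x: "x \<in> P" and y: "y \<in> P"
  shows "le x y \<longleftrightarrow> sasaki P le c x y = {one}"
proof
  have oj: "is_join P le (c z) z one" if z0: "z \<in> P" for z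
  proof -
    obtain m where m: "is_meet P le one (c z) m" "is_join P le z m one"
      using om z0 oP leo[OF z0] unfolding orthomodular_def by blast
    have "le m (c z)" "m \<in> P" using m(1) unfolding is_meet_def by auto
    moreover have "le (c z) m" using m(1) cP[OF z0] leo[OF cP[OF z0]] refl[OF cP[OF z0]] unfolding is_meet_def by blast
    ultimately have "m = c z" using antis cP[OF z0] by blast
    then show ?thesis using m(2) unfolding is_join_def by auto
  qed
  show "le x y \<Longrightarrow> sasaki P le c x y = {one}"
    using sasaki_one_le[OF x y _ oj[OF x]] by simp
next
  assume S: "sasaki P le c x y = {one}"
  obtain m where m: "m \<in> MaxS le (Lxy P le x y)" using max_exists[OF lc x y] by blast
  have mP: "m \<in> P" and mx: "le m x" and my: "le m y"
    using m unfolding MaxS_def Lxy_def by auto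
  have "le (c x) (c m)" using mx anti mP x by blast
  then obtain j where j: "is_join P le (c x) m j"
    using om cP[OF x] mP unfolding orthomodular_def orthogonal_def by blast
  have "j \<in> sasaki P le c x y" using j m unfolding sasaki_def join_set_def by auto
  then have j1: "j = one" using S by auto
  obtain z where z: "is_meet P le x (c m) z" "is_join P le m z x"
    using om mP x mx unfolding orthomodular_def by blast
  have zP': "z \<in> P" "le z x" "le z (c m)" using z(1) unfolding is_meet_def by auto
  have a: "le (c x) (c z)" using zP' anti x by blast
  have b: "le m (c z)" using zP'(1,3) cle1 mP by blast
  have "le j (c z)" using j a b cP[OF zP'(1)] unfolding is_join_def by blast
  then have "le one (c z)" using j1 by simp
  then have "c z = one" using antis leo cP zP'(1) oP by blast
  then have "z = zero" using c_one cc[OF zP'(1)] by metis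
  then have "x = m" using z(2) join_zero[OF mP] by simp
  then show "le x y" using my by simp
qed

lemma part_ii_i:
  assumes og: "orthogonal P le c"
    and S: "\<forall>x\<in>P. \<forall>y\<in>P. le x y \<longleftrightarrow> sasaki P le c x y = {one}"
  shows "orthomodular P le c"
  unfolding orthomodular_def
proof (intro conjI og ballI impI)
  have oj: "is_join P le (c z) z one" if zP: "z \<in> P" for z
  proof -
    have "le (c z) (c z)" using refl cP zP by blast
    then obtain j where j: "is_join P le (c z) z j"
      using og zP cP[OF zP] unfolding orthogonal_def by blast
    have "sasaki P le c z one = {one}" using S zP oP leo[OF zP] by blast
    then show ?thesis using sasaki_le[OF zP oP leo[OF zP]] j by auto
  qed
  fix x y assume x: "x \<in> P" and y: "y \<in> P" and xy: "le x y"
  have "le (c y) (c x)" using anti x y xy by blast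
  then obtain k where k: "is_join P le (c y) x k"
    using og x cP[OF y] unfolding orthogonal_def by blast
  define m where "m = c k"
  have mm: "is_meet P le y (c x) m"
    using meet_dual[OF y cP[OF x]] k cc x unfolding m_def by simp
  have mP: "m \<in> P" and my: "le m y" and mx: "le m (c x)" using mm unfolding is_meet_def by auto
  have "le x (c m)" using mx cle1[OF mP x] by blast
  then obtain w where w: "is_join P le x m w"
    using og x mP unfolding orthogonal_def by blast
  have wP: "w \<in> P" and wy: "le w y" using w my xy y unfolding is_join_def by auto
  have "le (c y) (c w)" using wy anti wP y by blast
  then obtain j where j: "is_join P le (c y) w j"
    using og wP cP[OF y] unfolding orthogonal_def by blast
  have jP: "j \<in> P" using j unfolding is_join_def by auto
  have cyj: "le (c y) j" and wj: "le w j" using j unfolding is_join_def by auto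
  have xw: "le x w" and mw: "le m w" using w unfolding is_join_def by auto
  have "le (c j) (c (c y))" using anti[OF cP[OF y] jP cyj] .
  then have "le (c j) y" using cc[OF y] by simp
  moreover have "le x j" using trans[OF x wP jP xw wj] .
  then have "le (c j) (c x)" using anti[OF x jP] by blast
  ultimately have "le (c j) m" using mm cP[OF jP] unfolding is_meet_def by blast
  then have "le (c m) (c (c j))" using anti[OF cP[OF jP] mP] by blast
  then have a: "le (c m) j" using cc[OF jP] by simp
  have b: "le m j" using trans[OF mP wP jP mw wj] .
  have "le one j" using oj[OF mP] a b jP unfolding is_join_def by blast
  then have "j = one" using antis leo jP oP by blast
  then have "sasaki P le c y w = {one}"
    using sasaki_ge[OF y wP wy] j join_unique by auto
  then have "le y w" using S y wP by blast
  then have "w = y" using antis wy wP y by blast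
  then show "\<exists>m. is_meet P le y (c x) m \<and> is_join P le x m y" using mm w by blast
qed

lemma dish_iff:
  "(\<forall>x\<in>P. \<forall>y\<in>P. le x y \<longleftrightarrow> sasaki P le c x y = {one}) \<longleftrightarrow>
   (\<forall>x\<in>P. \<forall>y\<in>P. le x y \<longleftrightarrow> dishkant P le c x y = {one})"
proof
  assume A: "\<forall>x\<in>P. \<forall>y\<in>P. le x y \<longleftrightarrow> sasaki P le c x y = {one}"
  show "\<forall>x\<in>P. \<forall>y\<in>P. le x y \<longleftrightarrow> dishkant P le c x y = {one}"
  proof (intro ballI)
    fix x y assume x: "x \<in> P" and y: "y \<in> P"
    have "le x y \<longleftrightarrow> le (c y) (c x)" using cle x y by blast
    also have "\<dots> \<longleftrightarrow> sasaki P le c (c y) (c x) = {one}" using A cP[OF x] cP[OF y] by blast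
    finally show "le x y \<longleftrightarrow> dishkant P le c x y = {one}" unfolding dishkant_def .
  qed
next
  assume A: "\<forall>x\<in>P. \<forall>y\<in>P. le x y \<longleftrightarrow> dishkant P le c x y = {one}"
  show "\<forall>x\<in>P. \<forall>y\<in>P. le x y \<longleftrightarrow> sasaki P le c x y = {one}"
  proof (intro ballI)
    fix x y assume x: "x \<in> P" and y: "y \<in> P"
    have "le x y \<longleftrightarrow> le (c y) (c x)" using cle x y by blast
    also have "\<dots> \<longleftrightarrow> dishkant P le c (c y) (c x) = {one}" using A cP[OF x] cP[OF y] by blast
    also have "dishkant P le c (c y) (c x) = sasaki P le c x y"
      unfolding dishkant_def using cc x y by simp
    finally show "le x y \<longleftrightarrow> sasaki P le c x y = {one}" .
  qed
qed

end

theorem theorem9: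
  assumes "bounded_poset_inv P le c zero one"
    and "orthogonal P le c"
    and "lub_complete P le"
  shows "(orthomodular P le c
            \<longleftrightarrow> (\<forall>x\<in>P. \<forall>y\<in>P. le x y \<longleftrightarrow> sasaki P le c x y = {one}))
       \<and> (orthomodular P le c
            \<longleftrightarrow> (\<forall>x\<in>P. \<forall>y\<in>P. le x y \<longleftrightarrow> dishkant P le c x y = {one}))"
proof -
  interpret bpi P le c zero one using assms(1) by (unfold_locales)
  have 1: "orthomodular P le c
            \<longleftrightarrow> (\<forall>x\<in>P. \<forall>y\<in>P. le x y \<longleftrightarrow> sasaki P le c x y = {one})"
    using part_i_ii[OF _ assms(3)] part_ii_i[OF assms(2)] by blast
  then show ?thesis using dish_iff by blast
qed

end
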